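(* Let $n>k\ge 1$ be integers, not both even, let $\alpha=\lceil n/2\rceil-\lfloor (n-k)/2\rfloor$ and $\beta=k-\alpha$, and let $G=\sqrt{n/k}\,W_n^H\Sigma W_k$. Let $1\le p\le n$ and let $G_{p\times k}$ be any $p\times k$ submatrix of $G$ formed by $p$ of its rows. Then the smallest eigenvalue of $G_{p\times k}G_{p\times k}^H$ is at most $1$ and the largest eigenvalue of $G_{p\times k}G_{p\times k}^H$ is at least $1$.
   Context: For a positive integer $l$, $W_l$ denotes the unitary $l\times l$ DFT matrix, $(W_l)_{r,s}=\frac{1}{\sqrt l}e^{-j2\pi(r-1)(s-1)/l}$, and $^H$ denotes conjugate transpose. $\Sigma$ is the $n\times k$ matrix $\begin{pmatrix} I_\alpha & 0\\ 0 & 0\\ 0 & I_\beta\end{pmatrix}$: its first $\alpha$ rows are $(I_\alpha\ 0)$, its last $\beta$ rows are $(0\ I_\beta)$, and its middle $n-k$ rows are zero. *)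

theory Defs
  imports Complex_Main "Jordan_Normal_Form.Schur_Decomposition"
begin

definition dft_mat :: "nat \<Rightarrow> complex mat" where
  "dft_mat l = mat l l (\<lambda>(r, s).
     exp (- \<i> * complex_of_real (2 * pi * real r * real s / real l)) / complex_of_real (sqrt (real l)))"

text \<open>The n x k matrix Sigma: first alpha rows (I_alpha 0), last beta rows (0 I_beta),
  middle n-k rows zero (0-indexed; alpha + beta = k).\<close>
definition Sigma_mat :: "nat \<Rightarrow> nat \<Rightarrow> nat \<Rightarrow> nat \<Rightarrow> complex mat" where
  "Sigma_mat n k \<alpha> \<beta> = mat n k (\<lambda>(i, j).
     if i < \<alpha> \<and> j = i then 1
     else if n - \<beta> \<le> i \<and> j = \<alpha> + (i - (n - \<beta>)) then 1 else 0)"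

definition row_submat :: "'a mat \<Rightarrow> nat \<Rightarrow> (nat \<Rightarrow> nat) \<Rightarrow> 'a mat" where
  "row_submat A p f = mat p (dim_col A) (\<lambda>(i, j). A $$ (f i, j))"

end

theory Submission
  imports Defs
begin


lemma adj_dims[simp]: "dim_row (mat_adjoint A) = dim_col A" "dim_col (mat_adjoint A) = dim_row A"
  by (auto simp: mat_adjoint_def mat_of_rows_def)

lemma adj_index[simp]: "i < dim_col A \<Longrightarrow> j < dim_row A \<Longrightarrow> mat_adjoint A $$ (i,j) = cnj (A $$ (j,i))"
  by (simp add: mat_adjoint_def mat_of_rows_index)

lemma dft_dims[simp]: "dim_row (dft_mat l) = l" "dim_col (dft_mat l) = l"
  by (auto simp: dft_mat_def)

lemma dft_index: "r < l \<Longrightarrow> s < l \<Longrightarrow> dft_mat l $$ (r,s) = cis (- 2 * pi * real r * real s / real l) / complex_of_real (sqrt (real l))"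
  by (simp add: dft_mat_def cis_conv_exp)

lemma orth:
  assumes "t < k" "t' < k"
  shows "(\<Sum>s<k. cis (- 2 * pi * real t * real s / real k) * cnj (cis (- 2 * pi * real t' * real s / real k)))
     = (if t = t' then of_nat k else 0)"
proof -
  define w where "w = cis (- 2 * pi * (real t - real t') / real k)"
  have eq: "cis (- 2 * pi * real t * real s / real k) * cnj (cis (- 2 * pi * real t' * real s / real k)) = w ^ s" for s
    unfolding w_def by (simp add: cis_cnj cis_mult DeMoivre algebra_simps diff_divide_distrib)
  show ?thesis
  proof (cases "t = t'")
    case True
    then show ?thesis unfolding eq by (simp add: w_def)
  next
    case False
    have k0: "k > 0" using assms by simp
    have "real k * (- 2 * pi * (real t - real t') / real k) = 2 * pi * (real t' - real t)"
      using k0 by (simp add: field_simps)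
    moreover have "real t' - real t \<in> \<int>" by simp
    ultimately have wk: "w ^ k = 1" unfolding w_def DeMoivre by (simp add: cis_multiple_2pi)
    have w1: "w \<noteq> 1"
    proof
      assume "w = 1"
      then have "Re w = 1" by simp
      then have "cos (- 2 * pi * (real t - real t') / real k) = 1" unfolding w_def by simp
      then obtain m :: int where m: "- 2 * pi * (real t - real t') / real k = real_of_int m * 2 * pi"
        using cos_one_2pi_int by blast
      have "real t' - real t = (- 2 * pi * (real t - real t') / real k) * real k / (2 * pi)"
        using k0 by (simp add: field_simps)
      also have "\<dots> = real_of_int m * real k" unfolding m by simp
      finally have tm: "real t' - real t = real_of_int m * real k" .
      have "m \<noteq> 0" using tm False by auto
      show False using assms
      proof (cases "m > 0")
        case True
        then have "real_of_int m \<ge> 1" by simp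
        then have "real_of_int m * real k \<ge> real k" using k0 by (simp add: mult_le_cancel_right1)
        then show False using assms tm by linarith
      next
        case False
        then have "real_of_int m \<le> -1" using \<open>m \<noteq> 0\<close> by simp
        then have "real_of_int m * real k \<le> (-1) * real k"
          using mult_right_mono[of "real_of_int m" "-1" "real k"] by simp
        then show False using assms tm by linarith
      qed
    qed
    have "(\<Sum>s<k. w ^ s) = (w ^ k - 1) / (w - 1)" using w1 by (rule geometric_sum)
    then show ?thesis unfolding eq using False wk by simp
  qed
qed

lemma orth2:
  assumes "t < k" "t' < k"
  shows "(\<Sum>s<k. (cis (- 2 * pi * real t * real s / real k) / complex_of_real (sqrt (real k))) *
           cnj (cis (- 2 * pi * real t' * real s / real k) / complex_of_real (sqrt (real k))))
     = (if t = t' then 1 else 0)"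
proof -
  have k0: "k > 0" using assms by simp
  have "(\<Sum>s<k. (cis (- 2 * pi * real t * real s / real k) / complex_of_real (sqrt (real k))) *
           cnj (cis (- 2 * pi * real t' * real s / real k) / complex_of_real (sqrt (real k))))
     = (\<Sum>s<k. cis (- 2 * pi * real t * real s / real k) * cnj (cis (- 2 * pi * real t' * real s / real k))) / of_real (real k)"
  proof -
    have sq: "complex_of_real (sqrt (real k)) * complex_of_real (sqrt (real k)) = of_nat k"
      by (simp flip: of_real_mult)
    have e: "(a / complex_of_real (sqrt (real k))) * cnj (b / complex_of_real (sqrt (real k))) = a * cnj b / of_nat k" for a b
      by (simp add: sq[symmetric])
    show ?thesis unfolding e sum_divide_distrib by simp
  qed
  also have "\<dots> = (if t = t' then 1 else 0)" unfolding orth[OF assms] using k0 by simp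
  finally show ?thesis .
qed

lemma parseval:
  fixes z :: "nat \<Rightarrow> complex" and k :: nat
  defines "W \<equiv> \<lambda>t s. cis (- 2 * pi * real t * real s / real k) / complex_of_real (sqrt (real k))"
  shows "(\<Sum>s<k. (\<Sum>t<k. z t * W t s) * cnj (\<Sum>t<k. z t * W t s)) = (\<Sum>t<k. z t * cnj (z t))"
proof -
  have "(\<Sum>s<k. (\<Sum>t<k. z t * W t s) * cnj (\<Sum>t<k. z t * W t s))
      = (\<Sum>s<k. \<Sum>t<k. \<Sum>t'<k. z t * cnj (z t') * (W t s * cnj (W t' s)))"
    by (simp add: sum_product cnj_sum algebra_simps)
  also have "\<dots> = (\<Sum>t<k. \<Sum>t'<k. z t * cnj (z t') * (\<Sum>s<k. W t s * cnj (W t' s)))"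
    by (simp add: sum_distrib_left) (subst sum.swap, rule sum.cong, simp, subst sum.swap, simp)
  also have "\<dots> = (\<Sum>t<k. \<Sum>t'<k. z t * cnj (z t') * (if t = t' then 1 else 0))"
    unfolding W_def by (intro sum.cong refl, subst orth2, auto)
  also have "\<dots> = (\<Sum>t<k. z t * cnj (z t))"
    by (simp add: if_distrib cong: if_cong)
  finally show ?thesis .
qed

lemma sigma_dims[simp]: "dim_row (Sigma_mat n k a b) = n" "dim_col (Sigma_mat n k a b) = k"
  by (auto simp: Sigma_mat_def)

lemma rsub_dims[simp]: "dim_row (row_submat A p f) = p" "dim_col (row_submat A p f) = dim_col A"
  by (auto simp: row_submat_def)

lemma rsub_index[simp]: "i < p \<Longrightarrow> j < dim_col A \<Longrightarrow> row_submat A p f $$ (i,j) = A $$ (f i, j)"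
  by (auto simp: row_submat_def)

definition mm :: "nat \<Rightarrow> nat \<Rightarrow> nat \<Rightarrow> nat \<Rightarrow> nat" where
  "mm n k a t = (if t < a then t else n - k + t)"

lemma mm_lt: "k < n \<Longrightarrow> t < k \<Longrightarrow> mm n k a t < n"
  by (auto simp: mm_def)

lemma sigma_index:
  assumes "u < n" "t < k" "k < n" "b = k - a"
  shows "Sigma_mat n k a b $$ (u,t) = (if u = mm n k a t then 1 else 0)"
proof -
  have e: "Sigma_mat n k a b $$ (u,t) = (if u < a \<and> t = u then 1
     else if n - b \<le> u \<and> t = a + (u - (n - b)) then 1 else 0)"
    using assms(1,2) by (simp add: Sigma_mat_def)
  have "(u < a \<and> t = u \<or> n - b \<le> u \<and> t = a + (u - (n - b))) \<longleftrightarrow> u = mm n k a t"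
    unfolding mm_def using assms by (cases "t < a"; cases "u < a"; simp; linarith)
  then show ?thesis unfolding e by auto
qed

lemma AS_index:
  assumes "r < n" "t < k" "k < n" "b = k - a"
  shows "(mat_adjoint (dft_mat n) * Sigma_mat n k a b) $$ (r,t) = cnj (dft_mat n $$ (mm n k a t, r))"
proof -
  have "(mat_adjoint (dft_mat n) * Sigma_mat n k a b) $$ (r,t)
     = (\<Sum>u\<in>{0..<n}. cnj (dft_mat n $$ (u, r)) * (if u = mm n k a t then 1 else 0))"
    using assms by (simp add: scalar_prod_def sigma_index)
  also have "\<dots> = cnj (dft_mat n $$ (mm n k a t, r))"
    using mm_lt[OF assms(3,2)] by (simp add: if_distrib sum.delta' cong: if_cong)
  finally show ?thesis .
qed

lemma diag_one:
  assumes "1 \<le> k" "k < n" "b = k - a" "r < n"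
  defines "G \<equiv> complex_of_real (sqrt (real n / real k)) \<cdot>\<^sub>m
               (mat_adjoint (dft_mat n) * Sigma_mat n k a b * dft_mat k)"
  shows "(\<Sum>s<k. G $$ (r,s) * cnj (G $$ (r,s))) = 1"
proof -
  define c where "c = complex_of_real (sqrt (real n / real k))"
  define z where "z t = c * cnj (dft_mat n $$ (mm n k a t, r))" for t
  define W where "W t s = cis (- 2 * pi * real t * real s / real k) / complex_of_real (sqrt (real k))" for t s
  have Gi: "G $$ (r,s) = (\<Sum>t<k. z t * W t s)" if s: "s < k" for s
  proof -
    have "G $$ (r,s) = c * (\<Sum>t\<in>{0..<k}. (mat_adjoint (dft_mat n) * Sigma_mat n k a b) $$ (r,t) * dft_mat k $$ (t,s))"
      unfolding G_def c_def using assms s by (simp add: scalar_prod_def)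
    also have "\<dots> = (\<Sum>t<k. z t * W t s)"
      unfolding z_def W_def sum_distrib_left atLeast0LessThan
      apply (intro sum.cong refl)
      subgoal for t using AS_index[OF assms(4) _ assms(2,3), of t] s assms by (simp add: dft_index)
      done
    finally show ?thesis .
  qed
  have zz: "z t * cnj (z t) = 1 / of_nat k" if t: "t < k" for t
  proof -
    have mt: "mm n k a t < n" using mm_lt[OF assms(2) t] .
    have "norm (z t) = sqrt (real n / real k) / sqrt (real n)"
      unfolding z_def c_def using mt assms by (simp add: dft_index norm_mult norm_divide)
    then have "norm (z t) ^ 2 = 1 / real k"
      using assms by (simp add: power_divide)
    then show ?thesis
      by (metis complex_norm_square of_real_divide of_real_1 of_real_of_nat_eq)
  qed
  have "(\<Sum>s<k. G $$ (r,s) * cnj (G $$ (r,s))) = (\<Sum>s<k. (\<Sum>t<k. z t * W t s) * cnj (\<Sum>t<k. z t * W t s))"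
    by (simp add: Gi)
  also have "\<dots> = (\<Sum>t<k. z t * cnj (z t))" unfolding W_def by (rule parseval)
  also have "\<dots> = (\<Sum>t<k. 1 / of_nat k)" by (simp add: zz)
  also have "\<dots> = 1" using assms by simp
  finally show ?thesis .
qed



definition tr :: "complex mat \<Rightarrow> complex" where "tr A = (\<Sum>i<dim_row A. A $$ (i,i))"

lemma tr_comm:
  assumes "A \<in> carrier_mat n m" "B \<in> carrier_mat m n"
  shows "tr (A * B) = tr (B * A)"
proof -
  have "tr (A * B) = (\<Sum>i<n. \<Sum>j<m. A $$ (i,j) * B $$ (j,i))"
    using assms by (simp add: tr_def scalar_prod_def atLeast0LessThan)
  also have "\<dots> = (\<Sum>j<m. \<Sum>i<n. B $$ (j,i) * A $$ (i,j))"
    by (subst sum.swap) (simp add: mult.commute)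
  also have "\<dots> = tr (B * A)"
    using assms by (simp add: tr_def scalar_prod_def atLeast0LessThan)
  finally show ?thesis .
qed

lemma tr_similar:
  assumes "similar_mat_wit A B P Q" "A \<in> carrier_mat n n"
  shows "tr A = tr B"
proof -
  note d = similar_mat_witD2[OF assms(2,1)]
  have "tr A = tr (P * (B * Q))" using d by (simp add: assoc_mult_mat[of P n n B n Q n])
  also have "\<dots> = tr ((B * Q) * P)" using d by (intro tr_comm[of _ n n]) auto
  also have "\<dots> = tr B" using d by (simp add: assoc_mult_mat[of B n n Q n P n])
  finally show ?thesis .
qed

lemma herm_ev_real:
  assumes M: "M \<in> carrier_mat p p" and H: "\<And>i j. i < p \<Longrightarrow> j < p \<Longrightarrow> M $$ (i,j) = cnj (M $$ (j,i))"
    and e: "eigenvalue M e"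
  shows "Im e = 0"
proof -
  obtain v where v: "v \<in> carrier_vec p" "v \<noteq> 0\<^sub>v p" "M *\<^sub>v v = e \<cdot>\<^sub>v v"
    using e M unfolding eigenvalue_def eigenvector_def by auto
  have H': "cnj (M $$ (i,j)) = M $$ (j,i)" if "i < p" "j < p" for i j using H[OF that(2,1)] by simp
  define q where "q = (\<Sum>i<p. \<Sum>j<p. cnj (v $ i) * M $$ (i,j) * v $ j)"
  have "cnj q = (\<Sum>i<p. \<Sum>j<p. v $ i * M $$ (j,i) * cnj (v $ j))"
    unfolding q_def cnj_sum by (intro sum.cong refl) (simp add: H')
  also have "\<dots> = q" unfolding q_def
    by (subst sum.swap) (intro sum.cong refl, simp only: mult.commute mult.left_commute)
  finally have cq: "cnj q = q" .
  have "q = (\<Sum>i<p. cnj (v $ i) * (M *\<^sub>v v) $ i)"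
    unfolding q_def using M v(1) by (simp add: scalar_prod_def sum_distrib_left atLeast0LessThan mult.assoc)
  also have "\<dots> = e * (\<Sum>i<p. cnj (v $ i) * v $ i)"
    using v by (simp add: sum_distrib_left mult.left_commute)
  finally have qe: "q = e * (\<Sum>i<p. cnj (v $ i) * v $ i)" .
  define s where "s = (\<Sum>i<p. (norm (v $ i))^2)"
  have ss: "(\<Sum>i<p. cnj (v $ i) * v $ i) = of_real s"
    unfolding s_def of_real_sum by (intro sum.cong refl) (subst complex_norm_square, simp add: mult.commute)
  have "\<exists>i<p. v $ i \<noteq> 0"
  proof (rule ccontr)
    assume "\<not> ?thesis"
    then have "\<forall>i<p. v $ i = 0" by blast
    then have "v = 0\<^sub>v p" using v(1) by (intro eq_vecI) auto
    then show False using v(2) by simp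
  qed
  then obtain i where i: "i < p" "v $ i \<noteq> 0" by blast
  have "s > 0" unfolding s_def
    by (rule sum_pos2[of _ i]) (use i in auto)
  have "Im (cnj q) = Im q" using cq by simp
  then have "Im q = 0" by simp
  then have "Im e * s = 0" unfolding qe ss by simp
  then show ?thesis using \<open>s > 0\<close> by simp
qed

lemma min_max:
  assumes M: "M \<in> carrier_mat p p" and p: "1 \<le> p"
    and H: "\<And>i j. i < p \<Longrightarrow> j < p \<Longrightarrow> M $$ (i,j) = cnj (M $$ (j,i))"
    and D: "\<And>i. i < p \<Longrightarrow> M $$ (i,i) = 1"
  shows "Min {x::real. eigenvalue M (complex_of_real x)} \<le> 1 \<and> Max {x::real. eigenvalue M (complex_of_real x)} \<ge> 1"
proof -
  define ev where "ev = {x::real. eigenvalue M (complex_of_real x)}"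
  obtain es where es: "char_poly M = (\<Prod>a\<leftarrow>es. [:- a, 1:])" "length es = p"
    using char_poly_factorized[OF M] by blast
  obtain B P Q where sd: "schur_decomposition M es = (B,P,Q)" by (cases "schur_decomposition M es") auto
  note sch = schur_decomposition[OF M es(1) sd]
  then have sim: "similar_mat_wit M B P Q" and dB: "diag_mat B = es" by auto
  have B: "B \<in> carrier_mat p p" using similar_mat_witD2[OF M sim] by auto
  have esi: "es ! i = B $$ (i,i)" if "i < p" for i
    using dB[symmetric] that B by (simp add: diag_mat_def)
  have "tr M = of_nat p" unfolding tr_def using M D by simp
  moreover have "tr M = tr B" by (rule tr_similar[OF sim M])
  moreover have "tr B = (\<Sum>i<p. es ! i)" unfolding tr_def using B esi by simp
  ultimately have sumes: "(\<Sum>i<p. es ! i) = of_nat p" by simp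
  have eig: "eigenvalue M (es ! i)" if "i < p" for i
  proof -
    have "es ! i \<in> set es" using that es(2) by simp
    then show ?thesis unfolding eigenvalue_root_char_poly[OF M] es(1)
      by (simp add: poly_prod_list prod_list_zero_iff)
  qed
  have real: "es ! i = complex_of_real (Re (es ! i))" if "i < p" for i
    using herm_ev_real[OF M H eig[OF that]] by (simp add: complex_eq_iff)
  have inev: "Re (es ! i) \<in> ev" if "i < p" for i
    unfolding ev_def using eig[OF that] real[OF that] by simp
  have "ev \<subseteq> Re ` set es"
  proof
    fix x assume "x \<in> ev"
    then have "poly (char_poly M) (complex_of_real x) = 0"
      unfolding ev_def eigenvalue_root_char_poly[OF M] by simp
    then have "complex_of_real x \<in> set es" unfolding es(1)
      by (auto simp: poly_prod_list prod_list_zero_iff)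
    then show "x \<in> Re ` set es" by (metis Re_complex_of_real image_eqI)
  qed
  then have fin: "finite ev" by (rule finite_subset) simp
  have sumre: "(\<Sum>i<p. Re (es ! i)) = real p"
    using arg_cong[OF sumes, of Re] by (simp add: Re_sum)
  have "\<exists>i<p. Re (es ! i) \<le> 1"
  proof (rule ccontr)
    assume "\<not> ?thesis"
    then have "\<And>i. i \<in> {..<p} \<Longrightarrow> 1 < Re (es ! i)" by auto
    then have "(\<Sum>i<p. (1::real)) < (\<Sum>i<p. Re (es ! i))"
      by (intro sum_strict_mono) (use p in \<open>auto simp: lessThan_empty_iff\<close>)
    then show False using sumre by simp
  qed
  then obtain i where i: "i < p" "Re (es ! i) \<le> 1" by blast
  have "\<exists>i<p. Re (es ! i) \<ge> 1"
  proof (rule ccontr)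
    assume "\<not> ?thesis"
    then have "\<And>i. i \<in> {..<p} \<Longrightarrow> Re (es ! i) < 1" by auto
    then have "(\<Sum>i<p. Re (es ! i)) < (\<Sum>i<p. (1::real))"
      by (intro sum_strict_mono) (use p in \<open>auto simp: lessThan_empty_iff\<close>)
    then show False using sumre by simp
  qed
  then obtain j where j: "j < p" "Re (es ! j) \<ge> 1" by blast
  have "Min ev \<le> 1" using Min_le[OF fin inev[OF i(1)]] i(2) by linarith
  moreover have "Max ev \<ge> 1" using Max_ge[OF fin inev[OF j(1)]] j(2) by linarith
  ultimately show ?thesis unfolding ev_def by blast
qed


lemma AAH_index:
  assumes "i < dim_row A" "j < dim_row A"
  shows "(A * mat_adjoint A) $$ (i,j) = (\<Sum>s<dim_col A. A $$ (i,s) * cnj (A $$ (j,s)))"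
  using assms by (simp add: scalar_prod_def atLeast0LessThan)

theorem theorem1:
  fixes n k p :: nat and f :: "nat \<Rightarrow> nat"
  assumes "1 \<le> k" and "k < n" and "\<not> (even n \<and> even k)"
    and "1 \<le> p" and "p \<le> n"
    and "inj_on f {..<p}" and "f ` {..<p} \<subseteq> {..<n}"
  shows
    "let \<alpha> = nat (\<lceil>real n / 2\<rceil> - \<lfloor>(real n - real k) / 2\<rfloor>);
         \<beta> = k - \<alpha>;
         G = complex_of_real (sqrt (real n / real k)) \<cdot>\<^sub>m
               (mat_adjoint (dft_mat n) * Sigma_mat n k \<alpha> \<beta> * dft_mat k);
         Gp = row_submat G p f;
         M = Gp * mat_adjoint Gp;
         ev = {x :: real. eigenvalue M (complex_of_real x)}
     in Min ev \<le> 1 \<and> Max ev \<ge> 1"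
proof -
  define a where "a = nat (\<lceil>real n / 2\<rceil> - \<lfloor>(real n - real k) / 2\<rfloor>)"
  define b where "b = k - a"
  define G where "G = complex_of_real (sqrt (real n / real k)) \<cdot>\<^sub>m
               (mat_adjoint (dft_mat n) * Sigma_mat n k a b * dft_mat k)"
  define Gp where "Gp = row_submat G p f"
  define M where "M = Gp * mat_adjoint Gp"
  have dG: "dim_row G = n" "dim_col G = k" unfolding G_def by simp_all
  have dGp: "dim_row Gp = p" "dim_col Gp = k" unfolding Gp_def using dG by simp_all
  have fi: "f i < n" if "i < p" for i using assms(7) that by auto
  have Mc: "M \<in> carrier_mat p p" unfolding M_def carrier_mat_def using dGp by simp
  have Mij: "M $$ (i,j) = (\<Sum>s<k. G $$ (f i,s) * cnj (G $$ (f j,s)))" if "i < p" "j < p" for i j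
    unfolding M_def using AAH_index[of i Gp j] that dGp dG unfolding Gp_def by simp
  have H: "M $$ (i,j) = cnj (M $$ (j,i))" if "i < p" "j < p" for i j
    unfolding Mij[OF that] Mij[OF that(2,1)] cnj_sum by (simp add: mult.commute)
  have D: "M $$ (i,i) = 1" if "i < p" for i
    unfolding Mij[OF that that] G_def by (rule diag_one[OF assms(1,2) b_def fi[OF that]])
  have "Min {x::real. eigenvalue M (complex_of_real x)} \<le> 1 \<and> Max {x::real. eigenvalue M (complex_of_real x)} \<ge> 1"
    by (rule min_max[OF Mc assms(4) H D])
  then show ?thesis unfolding Let_def a_def[symmetric] b_def[symmetric] G_def[symmetric] Gp_def[symmetric] M_def[symmetric] .
qed

end
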